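(* Let $n\geq 3$ and let $\tau$ be a maximal simplex of $\mathrm{VR}(\mathbb{Z}^n;2)$. Then one of the following holds: (i) $\tau=N[x]$ for some $x\in\mathbb{Z}^n$; (ii) $\tau=\{x,x^{i_0},x^{j_0},x^{i_0,j_0}\}$ for some $x\in\mathbb{Z}^n$ and $i_0,j_0\in[n]^{\pm}$; (iii) $\tau=\{x,x^{i_0,j_0},x^{j_0,k_0},x^{i_0,k_0}\}$ for some $x\in\mathbb{Z}^n$ and $i_0,j_0,k_0\in[n]^{\pm}$.
   Context: $\mathbb{Z}^n$ carries the Manhattan metric $d(x,y)=\sum_{i=1}^n|x_i-y_i|$; $\mathrm{VR}(X;r)$ is the simplicial complex on $X$ whose simplices are finite subsets of diameter at most $r$. Write $[n]=\{1,\ldots,n\}$, $[-n]=\{-1,\ldots,-n\}$, $[n]^{\pm}=[n]\cup[-n]$. For $x\in\mathbb{Z}^n$ and $i_1,\ldots,i_k\in[n]^{\pm}$ with pairwise distinct absolute values, $x^{i_1,\ldots,i_k}\in\mathbb{Z}^n$ is obtained from $x$ by adding $1$ to the $j$-th coordinate for each $j\in\{i_1,\ldots,i_k\}\cap[n]$ and subtracting $1$ from the $j$-th coordinate for each $j$ with $-j\in\{i_1,\ldots,i_k\}$, other coordinates unchanged. $N[x]=\{y\in\mathbb{Z}^n: d(x,y)\leq 1\}$ is the closed neighbourhood of $x$ in the grid graph. *)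

theory Defs
  imports "HOL-Analysis.Analysis"
begin

text \<open>Points of Z^n are modelled as int ^ 'n (n = CARD('n)).
  A signed index in [n]^pm is a pair (i, s) with i a coordinate and
  s = True meaning +i, s = False meaning -i.\<close>

definition manh :: "int ^ 'n \<Rightarrow> int ^ 'n \<Rightarrow> int" where
  "manh x y = (\<Sum>i\<in>UNIV. \<bar>x $ i - y $ i\<bar>)"

definition vr_simplex :: "int \<Rightarrow> (int ^ 'n) set \<Rightarrow> bool" where
  "vr_simplex r \<sigma> \<longleftrightarrow> finite \<sigma> \<and> \<sigma> \<noteq> {} \<and> (\<forall>a\<in>\<sigma>. \<forall>b\<in>\<sigma>. manh a b \<le> r)"

definition vr_maximal_simplex :: "int \<Rightarrow> (int ^ 'n) set \<Rightarrow> bool" where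
  "vr_maximal_simplex r \<tau> \<longleftrightarrow> vr_simplex r \<tau> \<and>
     (\<forall>\<sigma>. vr_simplex r \<sigma> \<and> \<tau> \<subseteq> \<sigma> \<longrightarrow> \<sigma> = \<tau>)"

definition sshift :: "int ^ 'n \<Rightarrow> 'n \<times> bool \<Rightarrow> int ^ 'n" where
  "sshift x a = (\<chi> j. if j = fst a then (if snd a then x $ j + 1 else x $ j - 1) else x $ j)"

definition closed_nbhd :: "int ^ 'n \<Rightarrow> (int ^ 'n) set" where
  "closed_nbhd x = {y. manh x y \<le> 1}"

end

theory Submission
  imports Defs
begin


definition sg :: "bool \<Rightarrow> int" where "sg s = (if s then 1 else -1)"
definition uv :: "'n \<times> bool \<Rightarrow> int ^ 'n" where
  "uv a = (\<chi> j. if j = fst a then sg (snd a) else 0)"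
definition n1 :: "int ^ 'n \<Rightarrow> int" where "n1 d = (\<Sum>i\<in>UNIV. \<bar>d $ i\<bar>)"

lemma uv_nth: "uv a $ j = (if j = fst a then sg (snd a) else 0)"
  by (simp add: uv_def)

lemma sshift_eq: "sshift x a = x + uv a"
  by (auto simp: sshift_def uv_def sg_def vec_eq_iff)

lemma manh_n1: "manh x y = n1 (y - x)"
  unfolding manh_def n1_def by (intro sum.cong) auto

lemma manh_sym: "manh x y = manh y x"
  unfolding manh_def by (intro sum.cong) auto

lemma n1_nonneg: "n1 d \<ge> 0"
  unfolding n1_def by (simp add: sum_nonneg)

lemma n1_zero_iff: "n1 d = 0 \<longleftrightarrow> d = 0"
  unfolding n1_def by (auto simp: sum_nonneg_eq_0_iff vec_eq_iff)

lemma n1_minus: "n1 (- d) = n1 d"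
  unfolding n1_def by simp

lemma n1_triangle: "n1 (d + e) \<le> n1 d + n1 e"
  unfolding n1_def by (simp add: sum.distrib[symmetric] sum_mono abs_triangle_ineq)

lemma n1_uv: "n1 (uv a) = 1"
proof -
  have "n1 (uv a) = (\<Sum>i\<in>UNIV. if i = fst a then 1 else 0)"
    unfolding n1_def by (intro sum.cong) (auto simp: uv_nth sg_def)
  also have "\<dots> = 1" by (simp add: sum.delta)
  finally show ?thesis .
qed

lemma n1_split: "n1 d = \<bar>d $ i\<bar> + (\<Sum>j\<in>UNIV-{i}. \<bar>d $ j\<bar>)"
  unfolding n1_def by (simp add: sum.remove)

lemma n1_ge1: "\<bar>d $ i\<bar> \<le> n1 d"
  using n1_split[of d i] by (smt (verit) sum_nonneg abs_ge_zero)

lemma n1_ge2: "i \<noteq> j \<Longrightarrow> \<bar>d $ i\<bar> + \<bar>d $ j\<bar> \<le> n1 d"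
proof -
  assume "i \<noteq> j"
  then have "\<bar>d $ i\<bar> + \<bar>d $ j\<bar> = (\<Sum>k\<in>{i,j}. \<bar>d $ k\<bar>)" by simp
  also have "\<dots> \<le> n1 d" unfolding n1_def by (rule sum_mono2) auto
  finally show ?thesis .
qed

lemma n1_ge3: "i \<noteq> j \<Longrightarrow> i \<noteq> k \<Longrightarrow> j \<noteq> k \<Longrightarrow> \<bar>d $ i\<bar> + \<bar>d $ j\<bar> + \<bar>d $ k\<bar> \<le> n1 d"
proof -
  assume "i \<noteq> j" "i \<noteq> k" "j \<noteq> k"
  then have "\<bar>d $ i\<bar> + \<bar>d $ j\<bar> + \<bar>d $ k\<bar> = (\<Sum>l\<in>{i,j,k}. \<bar>d $ l\<bar>)" by simp
  also have "\<dots> \<le> n1 d" unfolding n1_def by (rule sum_mono2) auto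
  finally show ?thesis .
qed

lemma rest_zero: fixes d :: "int ^ 'n" shows "(\<Sum>j\<in>UNIV-{i}. \<bar>d $ j\<bar>) = 0 \<Longrightarrow> j \<noteq> i \<Longrightarrow> d $ j = 0"
proof -
  assume h: "(\<Sum>j\<in>UNIV-{i}. \<bar>d $ j\<bar>) = 0" "j \<noteq> i"
  have "\<forall>k\<in>UNIV-{i}. \<bar>d $ k\<bar> = 0"
    using h(1) sum_nonneg_eq_0_iff[of "UNIV-{i}" "\<lambda>k. \<bar>d $ k\<bar>"] by simp
  then show "d $ j = 0" using h(2) by simp
qed

lemma n1_one: assumes "n1 d = 1" shows "\<exists>a. d = uv a"
proof -
  have "d \<noteq> 0" using assms n1_zero_iff by force
  then obtain i where i: "d $ i \<noteq> 0" by (auto simp: vec_eq_iff)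
  have "\<bar>d $ i\<bar> \<le> 1" using n1_ge1[of d i] assms by simp
  with i have di: "\<bar>d $ i\<bar> = 1" by linarith
  then have "(\<Sum>j\<in>UNIV-{i}. \<bar>d $ j\<bar>) = 0" using n1_split[of d i] assms by simp
  then have z: "\<And>j. j \<noteq> i \<Longrightarrow> d $ j = 0" using rest_zero by blast
  have "d = uv (i, d $ i > 0)"
    using di z i by (auto simp: vec_eq_iff uv_nth sg_def abs_if)
  then show ?thesis by blast
qed

lemma n1_two: assumes "n1 d = 2" shows "\<exists>a b. d = uv a + uv b"
proof -
  have "d \<noteq> 0" using assms n1_zero_iff by force
  then obtain i where i: "d $ i \<noteq> 0" by (auto simp: vec_eq_iff)
  have "\<bar>d $ i\<bar> \<le> 2" using n1_ge1[of d i] assms by simp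
  with i have "\<bar>d $ i\<bar> = 1 \<or> \<bar>d $ i\<bar> = 2" by linarith
  then show ?thesis
  proof
    assume di: "\<bar>d $ i\<bar> = 2"
    then have "(\<Sum>j\<in>UNIV-{i}. \<bar>d $ j\<bar>) = 0" using n1_split[of d i] assms by simp
    then have z: "\<And>j. j \<noteq> i \<Longrightarrow> d $ j = 0" using rest_zero by blast
    have "d = uv (i, d $ i > 0) + uv (i, d $ i > 0)"
      using di z i by (auto simp: vec_eq_iff uv_nth sg_def abs_if)
    then show ?thesis by blast
  next
    assume di: "\<bar>d $ i\<bar> = 1"
    define a where "a = (i, d $ i > 0)"
    have s1: "n1 (d - uv a) = \<bar>(d - uv a) $ i\<bar> + (\<Sum>j\<in>UNIV-{i}. \<bar>(d - uv a) $ j\<bar>)"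
      by (rule n1_split)
    have "d $ i = 1 \<or> d $ i = -1" using di by arith
    then have s2: "(d - uv a) $ i = 0" by (auto simp: a_def uv_nth sg_def)
    have s3: "(\<Sum>j\<in>UNIV-{i}. \<bar>(d - uv a) $ j\<bar>) = (\<Sum>j\<in>UNIV-{i}. \<bar>d $ j\<bar>)"
      by (intro sum.cong) (auto simp: a_def uv_nth)
    have s4: "(\<Sum>j\<in>UNIV-{i}. \<bar>d $ j\<bar>) = 1" using n1_split[of d i] assms di by simp
    have "n1 (d - uv a) = 1" using s1 s2 s3 s4 by simp
    then obtain b where "d - uv a = uv b" using n1_one by blast
    then have "d = uv a + uv b" by (simp add: algebra_simps)
    then show ?thesis by blast
  qed
qed

lemma uv_sum_zero: "uv a + uv b = 0 \<longleftrightarrow> fst a = fst b \<and> snd a \<noteq> snd b"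
proof
  assume h: "uv a + uv b = 0"
  have "(uv a + uv b) $ fst a = 0" using h by simp
  then show "fst a = fst b \<and> snd a \<noteq> snd b"
    by (auto simp: uv_nth sg_def split: if_splits)
next
  assume "fst a = fst b \<and> snd a \<noteq> snd b"
  then show "uv a + uv b = 0"
    by (auto simp: vec_eq_iff uv_nth sg_def)
qed

lemma eq2:
  assumes h: "uv a + uv b = uv c + uv d"
  shows "(a = c \<and> b = d) \<or> (a = d \<and> b = c) \<or> (uv a + uv b = 0 \<and> uv c + uv d = 0)"
proof -
  obtain a1 a2 b1 b2 c1 c2 d1 d2 where p: "a = (a1,a2)" "b = (b1,b2)" "c = (c1,c2)" "d = (d1,d2)"
    by (cases a, cases b, cases c, cases d) auto
  have e1: "(uv a + uv b) $ a1 = (uv c + uv d) $ a1" using h by simp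
  have e2: "(uv a + uv b) $ b1 = (uv c + uv d) $ b1" using h by simp
  have e3: "(uv a + uv b) $ c1 = (uv c + uv d) $ c1" using h by simp
  have e4: "(uv a + uv b) $ d1 = (uv c + uv d) $ d1" using h by simp
  show ?thesis using e1 e2 e3 e4 unfolding p uv_sum_zero
    by (auto simp: uv_nth sg_def split: if_splits)
qed


lemma coord_abs:
  assumes "a \<noteq> e" "a \<noteq> f" "b \<noteq> e" "b \<noteq> f"
    "fst a = fst b \<longrightarrow> snd a = snd b" "fst e = fst f \<longrightarrow> snd e = snd f"
  shows "\<bar>(uv a + uv b - uv e - uv f) $ i\<bar> =
    (if fst a = i then 1 else 0) + (if fst b = i then 1 else 0) +
    (if fst e = i then 1 else 0) + (if fst f = i then 1 else 0)"
proof -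
  obtain a1 a2 b1 b2 c1 c2 d1 d2 where p: "a = (a1,a2)" "b = (b1,b2)" "e = (c1,c2)" "f = (d1,d2)"
    by (cases a, cases b, cases e, cases f) auto
  show ?thesis using assms unfolding p
    by (cases "a1 = i"; cases "b1 = i"; cases "c1 = i"; cases "d1 = i"; cases a2; cases b2; cases c2; cases d2)
      (simp_all add: uv_nth sg_def)
qed

lemma share:
  assumes n: "n1 (uv a + uv b - uv e - uv f) \<le> 2"
    and va: "uv a + uv b \<noteq> 0" and ve: "uv e + uv f \<noteq> 0"
  shows "a = e \<or> a = f \<or> b = e \<or> b = f"
proof (rule ccontr)
  assume "\<not> ?thesis"
  then have ne: "a \<noteq> e" "a \<noteq> f" "b \<noteq> e" "b \<noteq> f" by auto
  have v1: "fst a = fst b \<longrightarrow> snd a = snd b" using va uv_sum_zero by blast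
  have v2: "fst e = fst f \<longrightarrow> snd e = snd f" using ve uv_sum_zero by blast
  define d where "d = uv a + uv b - uv e - uv f"
  note c = coord_abs[OF ne v1 v2, folded d_def]
  have ha: "\<bar>d $ fst a\<bar> \<ge> 1 + (if fst b = fst a then 1 else 0) + (if fst e = fst a then 1 else 0)"
    using c[of "fst a"] by (auto split: if_splits)
  have hb: "\<bar>d $ fst b\<bar> \<ge> 1 + (if fst e = fst b then 1 else 0)"
    using c[of "fst b"] by (auto split: if_splits)
  have he: "\<bar>d $ fst e\<bar> \<ge> 1"
    using c[of "fst e"] by (auto split: if_splits)
  have "n1 d \<ge> 3"
  proof (cases "fst a = fst b")
    case T: True
    show ?thesis
    proof (cases "fst e = fst a")
      case True
      then have "\<bar>d $ fst a\<bar> \<ge> 3" using ha T by simp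
      then show ?thesis using n1_ge1[of d "fst a"] by linarith
    next
      case False
      then have "\<bar>d $ fst a\<bar> \<ge> 2" using ha T by simp
      moreover have "fst a \<noteq> fst e" using False by simp
      ultimately show ?thesis using n1_ge2[of "fst a" "fst e" d] he by linarith
    qed
  next
    case F: False
    have hb1: "\<bar>d $ fst b\<bar> \<ge> 1" using hb by (simp split: if_splits)
    have ha1: "\<bar>d $ fst a\<bar> \<ge> 1" using ha by (simp split: if_splits)
    show ?thesis
    proof (cases "fst e = fst a")
      case True
      then have "\<bar>d $ fst a\<bar> \<ge> 2" using ha by (simp split: if_splits)
      then show ?thesis using n1_ge2[of "fst a" "fst b" d] hb1 F by linarith
    next
      case F1: False
      show ?thesis
      proof (cases "fst e = fst b")
        case True
        then have "\<bar>d $ fst b\<bar> \<ge> 2" using hb by simp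
        then show ?thesis using n1_ge2[of "fst a" "fst b" d] ha1 F by linarith
      next
        case False
        then show ?thesis using n1_ge3[of "fst a" "fst b" "fst e" d] ha1 hb1 he F F1 by force
      qed
    qed
  qed
  then show False using n d_def by simp
qed

definition ps :: "int ^ 'n \<Rightarrow> int" where "ps x = (\<Sum>i\<in>UNIV. x $ i)"

lemma parity: "even (manh x y) \<longleftrightarrow> (even (ps x) \<longleftrightarrow> even (ps y))"
proof -
  have "manh x y - (ps x - ps y) = (\<Sum>i\<in>UNIV. \<bar>x $ i - y $ i\<bar> - (x $ i - y $ i))"
    unfolding manh_def ps_def by (simp add: sum_subtractf)
  also have "even \<dots>"
  proof (rule dvd_sum)
    fix i
    define t where "t = x $ i - y $ i"
    have "\<bar>t\<bar> - t = 0 \<or> \<bar>t\<bar> - t = 2*(-t)" by arith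
    then have "even (\<bar>t\<bar> - t)" by (metis dvd_0_right dvd_triv_left)
    then show "even (\<bar>x $ i - y $ i\<bar> - (x $ i - y $ i))" by (simp add: t_def)
  qed
  finally have "even (manh x y - (ps x - ps y))" .
  then show ?thesis by presburger
qed

lemma manh_self: "manh x x = 0" by (simp add: manh_n1 n1_zero_iff)
lemma manh_nonneg: "manh x y \<ge> 0" by (simp add: manh_n1 n1_nonneg)
lemma manh_zero_iff: "manh x y = 0 \<longleftrightarrow> x = y" unfolding manh_n1 n1_zero_iff by auto

lemma manh_one: "manh x y = 1 \<Longrightarrow> \<exists>a. y = x + uv a"
  using n1_one[of "y - x"] by (auto simp: manh_n1 algebra_simps)

lemma manh_two: "manh x y = 2 \<Longrightarrow> \<exists>a b. y = x + uv a + uv b"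
  using n1_two[of "y - x"] by (auto simp: manh_n1 algebra_simps)

lemma common_nb:
  assumes ab: "fst a \<noteq> fst b" and h1: "manh y t = 1" and h2: "manh (y + uv a + uv b) t = 1"
  shows "t = y + uv a \<or> t = y + uv b"
proof -
  obtain e where e: "t = y + uv e" using manh_one[OF h1] by blast
  have "manh t (y + uv a + uv b) = 1" using h2 manh_sym by metis
  then obtain f where f: "y + uv a + uv b = t + uv f" using manh_one by blast
  have "uv a + uv b = uv e + uv f" using e f by (simp add: algebra_simps)
  from eq2[OF this] have "e = a \<or> e = b \<or> uv a + uv b = 0" by auto
  moreover have "uv a + uv b \<noteq> 0" using ab uv_sum_zero by blast
  ultimately show ?thesis using e by auto
qed



lemma mem_nbhd: "t \<in> closed_nbhd x \<longleftrightarrow> manh x t \<le> 1" by (simp add: closed_nbhd_def)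

lemma manh_tri: "manh p q \<le> manh p x + manh x q"
proof -
  have "manh p q = n1 ((q - x) + (x - p))" by (simp add: manh_n1)
  also have "\<dots> \<le> n1 (q - x) + n1 (x - p)" by (rule n1_triangle)
  finally show ?thesis by (simp add: manh_n1)
qed

lemma odd_le2: "odd (m::int) \<Longrightarrow> 0 \<le> m \<Longrightarrow> m \<le> 2 \<Longrightarrow> m = 1" by presburger

lemma share_pts:
  assumes "manh (p + uv e + uv f) (p + uv g + uv h) \<le> 2" "uv e + uv f \<noteq> 0" "uv g + uv h \<noteq> 0"
  shows "g = e \<or> g = f \<or> h = e \<or> h = f"
proof -
  have "manh (p + uv e + uv f) (p + uv g + uv h) = n1 (uv g + uv h - uv e - uv f)"
    by (simp add: manh_n1 algebra_simps)
  then show ?thesis using share[of g h e f] assms by auto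
qed


lemma caseA:
  assumes S: "\<forall>p\<in>S. \<forall>q\<in>S. manh p q \<le> 2"
    and y: "y \<in> S" and z: "z \<in> S" and yz: "manh y z = 1"
    and w: "w \<in> S" "manh y w = 2" and v: "v \<in> S" "manh z v = 2"
  shows "\<exists>y a b. fst a \<noteq> fst b \<and> S \<subseteq> {y, y + uv a, y + uv b, y + uv a + uv b}"
proof -
  let ?P = "\<lambda>t. even (ps t)"
  have odd1: "manh p q = 1" if "p \<in> S" "q \<in> S" "?P p \<noteq> ?P q" for p q
  proof -
    have "odd (manh p q)" using parity[of p q] that(3) by auto
    moreover have "manh p q \<le> 2" "manh p q \<ge> 0" using S that manh_nonneg by auto
    ultimately show ?thesis using odd_le2 by blast
  qed
  have Pyz: "?P y \<noteq> ?P z" using parity[of y z] yz by auto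
  have Pw: "?P w = ?P y" using parity[of y w] w(2) by auto
  have Pv: "?P v = ?P z" using parity[of z v] v(2) by auto
  obtain a where za: "z = y + uv a" using manh_one[OF yz] by blast
  have "manh y v = 1" using odd1[OF y v(1)] Pv Pyz by auto
  then obtain c where vc: "v = y + uv c" using manh_one by blast
  have "manh z w = 1" using odd1[OF z w(1)] Pw Pyz by auto
  then obtain b where wb: "w = z + uv b" using manh_one by blast
  have "manh v w = 1" using odd1[OF v(1) w(1)] Pv Pw Pyz by auto
  then obtain d where wd: "w = v + uv d" using manh_one by blast
  have wy: "w = y + (uv a + uv b)" using za wb by (simp add: add.assoc)
  have e: "uv a + uv b = uv c + uv d" using wy vc wd by (simp add: add.assoc)
  have zv: "z \<noteq> v"
  proof
    assume "z = v" then show False using v(2) manh_self[of v] by simp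
  qed
  have yw: "w \<noteq> y"
  proof
    assume "w = y" then show False using w(2) manh_self[of y] by simp
  qed
  have ab0: "uv a + uv b \<noteq> 0" using yw wy by auto
  have "a \<noteq> c" using zv za vc by auto
  with eq2[OF e] ab0 have bc: "b = c" by auto
  have ab: "fst a \<noteq> fst b"
  proof
    assume "fst a = fst b"
    moreover have "a \<noteq> b" using zv za vc bc by auto
    ultimately have "uv a + uv b = 0" using uv_sum_zero[of a b] by (cases a, cases b) auto
    then show False using ab0 by simp
  qed
  have "S \<subseteq> {y, y + uv a, y + uv b, y + uv a + uv b}"
  proof
    fix t assume t: "t \<in> S"
    show "t \<in> {y, y + uv a, y + uv b, y + uv a + uv b}"
    proof (cases "?P t = ?P y")
      case True
      have zt: "manh z t = 1" using odd1[OF z t] True Pyz by auto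
      have vt: "manh v t = 1" using odd1[OF v(1) t] True Pyz Pv by auto
      define a' where "a' = (fst a, \<not> snd a)"
      have aa: "uv a + uv a' = 0" using uv_sum_zero[of a a'] by (simp add: a'_def)
      have yz': "y = z + uv a'" using za aa by (simp add: add.assoc)
      have vz: "v = z + uv a' + uv b" using yz' vc bc by simp
      have "fst a' \<noteq> fst b" using ab by (simp add: a'_def)
      from common_nb[OF this zt] vt vz have "t = z + uv a' \<or> t = z + uv b" by simp
      then have "t = y \<or> t = w" using yz' wb by metis
      moreover have "w = y + uv a + uv b" using wy by (simp add: add.assoc)
      ultimately show ?thesis by auto
    next
      case False
      have yt: "manh y t = 1" using odd1[OF y t] False by auto
      have wt: "manh w t = 1" using odd1[OF w(1) t] False Pw by auto
      from common_nb[OF ab yt] wt wy have "t = y + uv a \<or> t = y + uv b" by (simp add: add.assoc)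
      then show ?thesis by auto
    qed
  qed
  then show ?thesis using ab by blast
qed


lemma caseB:
  assumes S: "\<forall>p\<in>S. \<forall>q\<in>S. manh p q \<le> 2" and S1: "\<forall>p\<in>S. \<forall>q\<in>S. manh p q \<noteq> 1"
    and p: "p \<in> S"
  shows "(\<exists>x. S \<subseteq> closed_nbhd x) \<or>
    (\<exists>p a b g. fst a \<noteq> fst b \<and> fst b \<noteq> fst g \<and> fst a \<noteq> fst g \<and>
       S \<subseteq> {p, p + uv a + uv b, p + uv b + uv g, p + uv a + uv g})"
proof (cases "S \<subseteq> {p}")
  case True
  then have "S \<subseteq> closed_nbhd p" by (auto simp: mem_nbhd manh_self)
  then show ?thesis by blast
next
  case False
  then obtain q where q: "q \<in> S" "q \<noteq> p" by auto
  have dec: "\<exists>e f. t = p + uv e + uv f \<and> uv e + uv f \<noteq> 0" if "t \<in> S" "t \<noteq> p" for t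
  proof -
    have "manh p t \<noteq> 0" "manh p t \<noteq> 1" "manh p t \<le> 2" "manh p t \<ge> 0"
      using that manh_zero_iff[of p t] S S1 p manh_nonneg[of p t] by auto
    then have "manh p t = 2" by linarith
    then obtain e f where "t = p + uv e + uv f" using manh_two by blast
    moreover have "uv e + uv f \<noteq> 0" using calculation that(2) by (auto simp: add.assoc)
    ultimately show ?thesis by blast
  qed
  obtain a b where qab: "q = p + uv a + uv b" and vab: "uv a + uv b \<noteq> 0" using dec q by blast
  define has where "has c t \<longleftrightarrow> (\<exists>h. t = p + uv c + uv h)" for c t
  have sh: "g = e \<or> g = f \<or> h = e \<or> h = f"
    if "p + uv e + uv f \<in> S" "p + uv g + uv h \<in> S" "uv e + uv f \<noteq> 0" "uv g + uv h \<noteq> 0" for e f g h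
    using share_pts[of p e f g h] S that by auto
  have H: "has a t \<or> has b t" if t: "t \<in> S" "t \<noteq> p" for t
  proof -
    obtain e f where ef: "t = p + uv e + uv f" "uv e + uv f \<noteq> 0" using dec[OF t] by blast
    have "e = a \<or> e = b \<or> f = a \<or> f = b" using sh[of a b e f] q qab vab t ef by auto
    then show ?thesis unfolding has_def using ef(1) by (metis add.assoc add.commute)
  qed
  have nb: "S \<subseteq> closed_nbhd (p + uv c)" if all: "\<forall>t\<in>S. t \<noteq> p \<longrightarrow> has c t" for c
  proof
    fix t assume t: "t \<in> S"
    show "t \<in> closed_nbhd (p + uv c)"
    proof (cases "t = p")
      case True
      have "manh (p + uv c) p = n1 (- uv c)" by (simp add: manh_n1)
      then show ?thesis using True by (simp add: mem_nbhd n1_minus n1_uv)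
    next
      case False
      then obtain h where "t = p + uv c + uv h" using all t unfolding has_def by blast
      then have "manh (p + uv c) t = n1 (uv h)" by (simp add: manh_n1)
      then show ?thesis by (simp add: mem_nbhd n1_uv)
    qed
  qed
  show ?thesis
  proof (cases "(\<forall>t\<in>S. t \<noteq> p \<longrightarrow> has a t) \<or> (\<forall>t\<in>S. t \<noteq> p \<longrightarrow> has b t)")
    case True
    then show ?thesis using nb by blast
  next
    case False
    then obtain t1 t2 where t1: "t1 \<in> S" "t1 \<noteq> p" "\<not> has a t1" and t2: "t2 \<in> S" "t2 \<noteq> p" "\<not> has b t2"
      by blast
    obtain g where g: "t1 = p + uv b + uv g" using H[OF t1(1,2)] t1(3) unfolding has_def by blast
    obtain h where h: "t2 = p + uv a + uv h" using H[OF t2(1,2)] t2(3) unfolding has_def by blast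
    have vbg: "uv b + uv g \<noteq> 0" using g t1(2) by (auto simp: add.assoc)
    have vah: "uv a + uv h \<noteq> 0" using h t2(2) by (auto simp: add.assoc)
    have nab: "a \<noteq> b" using t1(3) g unfolding has_def by blast
    have nag: "a \<noteq> g" using t1(3) g unfolding has_def by (metis add.assoc add.commute)
    have nbh: "b \<noteq> h" using t2(3) h unfolding has_def by (metis add.assoc add.commute)
    have "a = b \<or> a = g \<or> h = b \<or> h = g" using sh[of b g a h] t1 t2 g h vbg vah by auto
    then have hg: "h = g" using nab nag nbh by auto
    have fab: "fst a \<noteq> fst b" using nab vab uv_sum_zero[of a b] by (cases a, cases b) auto
    have fbg: "fst b \<noteq> fst g" using nbh hg vbg uv_sum_zero[of b g] by (cases b, cases g) auto
    have fag: "fst a \<noteq> fst g" using nag vah hg uv_sum_zero[of a g] by (cases a, cases g) auto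
    have "S \<subseteq> {p, p + uv a + uv b, p + uv b + uv g, p + uv a + uv g}"
    proof
      fix t assume t: "t \<in> S"
      show "t \<in> {p, p + uv a + uv b, p + uv b + uv g, p + uv a + uv g}"
      proof (cases "t = p")
        case True then show ?thesis by simp
      next
        case False
        obtain e f where ef: "t = p + uv e + uv f" "uv e + uv f \<noteq> 0" using dec[OF t False] by blast
        have s1: "e = a \<or> e = b \<or> f = a \<or> f = b" using sh[of a b e f] q qab vab t ef by auto
        have s2: "e = b \<or> e = g \<or> f = b \<or> f = g" using sh[of b g e f] t1 g vbg t ef by auto
        have s3: "e = a \<or> e = g \<or> f = a \<or> f = g" using sh[of a g e f] t2 h hg vah t ef by auto
        from s1 s2 s3 nab nag have "(e = a \<and> f = b) \<or> (e = b \<and> f = a) \<or> (e = b \<and> f = g) \<or>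
          (e = g \<and> f = b) \<or> (e = a \<and> f = g) \<or> (e = g \<and> f = a)"
          using fbg by auto
        then show ?thesis using ef(1) by (auto simp: add_ac)
      qed
    qed
    then show ?thesis using fab fbg fag by blast
  qed
qed

lemma cover:
  assumes S: "\<forall>p\<in>S. \<forall>q\<in>S. manh p q \<le> 2" and ne: "S \<noteq> {}"
  shows "(\<exists>x. S \<subseteq> closed_nbhd x)
    \<or> (\<exists>y a b. fst a \<noteq> fst b \<and> S \<subseteq> {y, y + uv a, y + uv b, y + uv a + uv b})
    \<or> (\<exists>p a b g. fst a \<noteq> fst b \<and> fst b \<noteq> fst g \<and> fst a \<noteq> fst g \<and>
       S \<subseteq> {p, p + uv a + uv b, p + uv b + uv g, p + uv a + uv g})"
proof (cases "\<exists>y\<in>S. \<exists>z\<in>S. manh y z = 1")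
  case True
  then obtain y z where y: "y \<in> S" and z: "z \<in> S" and yz: "manh y z = 1" by blast
  show ?thesis
  proof (cases "\<forall>w\<in>S. manh y w \<le> 1")
    case True
    then have "S \<subseteq> closed_nbhd y" by (auto simp: mem_nbhd)
    then show ?thesis by blast
  next
    case F1: False
    show ?thesis
    proof (cases "\<forall>w\<in>S. manh z w \<le> 1")
      case True
      then have "S \<subseteq> closed_nbhd z" by (auto simp: mem_nbhd)
      then show ?thesis by blast
    next
      case False
      then obtain v where v: "v \<in> S" "manh z v = 2" using S z by force
      obtain w where w: "w \<in> S" "manh y w = 2" using F1 S y by force
      show ?thesis using caseA[OF S y z yz w v] by blast
    qed
  qed
next
  case False
  obtain p where "p \<in> S" using ne by blast
  from caseB[OF S _ this] False show ?thesis by blast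
qed



lemma nbhd_simplex: "vr_simplex 2 (closed_nbhd x)"
proof -
  have "closed_nbhd x \<subseteq> insert x (range (\<lambda>a. x + uv a))"
  proof
    fix t assume "t \<in> closed_nbhd x"
    then have "manh x t \<le> 1" by (simp add: mem_nbhd)
    then have "manh x t = 0 \<or> manh x t = 1" using manh_nonneg[of x t] by linarith
    then show "t \<in> insert x (range (\<lambda>a. x + uv a))"
      using manh_zero_iff[of x t] manh_one[of x t] by auto
  qed
  moreover have "finite (insert x (range (\<lambda>a. x + uv a)))" by simp
  ultimately have fin: "finite (closed_nbhd x)" by (rule finite_subset)
  have "x \<in> closed_nbhd x" by (simp add: mem_nbhd manh_self)
  moreover have "manh a b \<le> 2" if "a \<in> closed_nbhd x" "b \<in> closed_nbhd x" for a b
    using that manh_tri[of a b x] manh_sym[of a x] by (simp add: mem_nbhd)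
  ultimately show ?thesis using fin unfolding vr_simplex_def by blast
qed

lemma n1_0: "n1 0 = 0" by (simp add: n1_zero_iff)

lemma n1_sum2: "n1 (uv a + uv b) \<le> 2"
  using n1_triangle[of "uv a" "uv b"] by (simp add: n1_uv)
lemma n1_diff2: "n1 (uv a - uv b) \<le> 2"
  using n1_triangle[of "uv a" "- uv b"] by (simp add: n1_uv n1_minus)
lemma n1_msum2: "n1 (- uv a - uv b) \<le> 2"
  using n1_triangle[of "- uv a" "- uv b"] by (simp add: n1_uv n1_minus)

lemma mstep: "q = p + d \<Longrightarrow> n1 d \<le> 2 \<Longrightarrow> manh p q \<le> 2"
  by (simp add: manh_n1)

lemma simplex4:
  assumes "manh a b \<le> 2" "manh a c \<le> 2" "manh a d \<le> 2" "manh b c \<le> 2" "manh b d \<le> 2" "manh c d \<le> 2"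
  shows "vr_simplex 2 {a, b, c, d}"
proof -
  have s: "manh y x \<le> 2" if "manh x y \<le> 2" for x y using that manh_sym[of x y] by simp
  have "manh p q \<le> 2" if "p \<in> {a,b,c,d}" "q \<in> {a,b,c,d}" for p q
    using that assms s[OF assms(1)] s[OF assms(2)] s[OF assms(3)] s[OF assms(4)] s[OF assms(5)] s[OF assms(6)]
    by (auto simp: manh_self)
  then show ?thesis unfolding vr_simplex_def by blast
qed

lemma n1_uv2: "n1 (uv a) \<le> 2" by (simp add: n1_uv)

lemma sq_simplex: "vr_simplex 2 {y, y + uv a, y + uv b, y + uv a + uv b}"
  apply (rule simplex4)
       apply (rule mstep[where d = "uv a"], simp, rule n1_uv2)
      apply (rule mstep[where d = "uv b"], simp, rule n1_uv2)
     apply (rule mstep[where d = "uv a + uv b"], simp add: add.assoc, rule n1_sum2)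
    apply (rule mstep[where d = "uv b - uv a"], simp, rule n1_diff2)
   apply (rule mstep[where d = "uv b"], simp, rule n1_uv2)
  apply (rule mstep[where d = "uv a"], simp add: add_ac, rule n1_uv2)
  done

lemma tet_simplex: "vr_simplex 2 {p, p + uv a + uv b, p + uv b + uv g, p + uv a + uv g}"
  apply (rule simplex4)
       apply (rule mstep[where d = "uv a + uv b"], simp add: add.assoc, rule n1_sum2)
      apply (rule mstep[where d = "uv b + uv g"], simp add: add.assoc, rule n1_sum2)
     apply (rule mstep[where d = "uv a + uv g"], simp add: add.assoc, rule n1_sum2)
    apply (rule mstep[where d = "uv g - uv a"], simp add: algebra_simps, rule n1_diff2)
   apply (rule mstep[where d = "uv g - uv b"], simp add: algebra_simps, rule n1_diff2)
  apply (rule mstep[where d = "uv a - uv b"], simp add: algebra_simps, rule n1_diff2)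
  done

theorem lemma4p1:
  fixes \<tau> :: "(int ^ 'n) set"
  assumes "CARD('n) \<ge> 3"
    and "vr_maximal_simplex 2 \<tau>"
  shows "(\<exists>x. \<tau> = closed_nbhd x)
       \<or> (\<exists>x i0 j0. fst i0 \<noteq> fst j0 \<and>
            \<tau> = {x, sshift x i0, sshift x j0, sshift (sshift x i0) j0})
       \<or> (\<exists>x i0 j0 k0. fst i0 \<noteq> fst j0 \<and> fst j0 \<noteq> fst k0 \<and> fst i0 \<noteq> fst k0 \<and>
            \<tau> = {x, sshift (sshift x i0) j0, sshift (sshift x j0) k0, sshift (sshift x i0) k0})"
proof -
  have sx: "vr_simplex 2 \<tau>" and mx: "\<And>\<sigma>. vr_simplex 2 \<sigma> \<Longrightarrow> \<tau> \<subseteq> \<sigma> \<Longrightarrow> \<sigma> = \<tau>"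
    using assms(2) unfolding vr_maximal_simplex_def by blast+
  have S: "\<forall>p\<in>\<tau>. \<forall>q\<in>\<tau>. manh p q \<le> 2" and ne: "\<tau> \<noteq> {}"
    using sx unfolding vr_simplex_def by blast+
  from cover[OF S ne] show ?thesis
  proof (elim disjE exE conjE)
    fix x assume "\<tau> \<subseteq> closed_nbhd x"
    then have "closed_nbhd x = \<tau>" using mx nbhd_simplex by blast
    then show ?thesis by blast
  next
    fix y a b assume ab: "fst a \<noteq> fst b" and sub: "\<tau> \<subseteq> {y, y + uv a, y + uv b, y + uv a + uv b}"
    then have "{y, y + uv a, y + uv b, y + uv a + uv b} = \<tau>" using mx sq_simplex by blast
    then have "\<tau> = {y, sshift y a, sshift y b, sshift (sshift y a) b}" by (simp add: sshift_eq)
    then show ?thesis using ab by blast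
  next
    fix p a b g assume d: "fst a \<noteq> fst b" "fst b \<noteq> fst g" "fst a \<noteq> fst g"
      and sub: "\<tau> \<subseteq> {p, p + uv a + uv b, p + uv b + uv g, p + uv a + uv g}"
    then have "{p, p + uv a + uv b, p + uv b + uv g, p + uv a + uv g} = \<tau>" using mx tet_simplex by blast
    then have "\<tau> = {p, sshift (sshift p a) b, sshift (sshift p b) g, sshift (sshift p a) g}"
      by (simp add: sshift_eq)
    then show ?thesis using d by blast
  qed
qed

end
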